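(* Let $\gamma$ be a Hamel basis of $\mathbb{R}$ over $\mathbb{Q}$ with $1\in\gamma$, let $A_\gamma:\mathbb{R}\to\mathbb{R}$ be the unique $\mathbb{Q}$-linear map with $A_\gamma(1)=1$ and $A_\gamma(b)=0$ for all $b\in\gamma\setminus\{1\}$, and let $n\ge1$ be an integer. Then $f_n(x)=A_\gamma(x)^n$ is a discontinuous $n$-monomial function whose graph $\{(x,f_n(x)):x\in\mathbb{R}\}$ is totally disconnected.
   Context: For $h\in\mathbb{R}$, $\Delta_h f(x)=f(x+h)-f(x)$ and $\Delta_h^{n}=\Delta_h\circ\Delta_h^{n-1}$. A function $f:\mathbb{R}\to\mathbb{R}$ is an $n$-monomial function if $\frac{1}{n!}\Delta_h^n f(x)=f(h)$ for all $x,h\in\mathbb{R}$. A subset of $\mathbb{R}^2$ is totally disconnected if all its connected components are singletons. *)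

theory Defs
  imports "HOL-Analysis.Analysis"
begin

definition rat_span :: "real set \<Rightarrow> real set" where
  "rat_span S = {x. \<exists>T c. finite T \<and> T \<subseteq> S \<and> (\<forall>t\<in>T. c t \<in> \<rat>) \<and> x = (\<Sum>t\<in>T. c t * t)}"

definition rat_independent :: "real set \<Rightarrow> bool" where
  "rat_independent S \<longleftrightarrow> (\<forall>T c. finite T \<and> T \<subseteq> S \<and> (\<forall>t\<in>T. c t \<in> \<rat>) \<and> (\<Sum>t\<in>T. c t * t) = 0
      \<longrightarrow> (\<forall>t\<in>T. c t = 0))"

definition hamel_basis :: "real set \<Rightarrow> bool" where
  "hamel_basis B \<longleftrightarrow> rat_independent B \<and> rat_span B = UNIV"

definition rat_linear :: "(real \<Rightarrow> real) \<Rightarrow> bool" where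
  "rat_linear A \<longleftrightarrow> (\<forall>x y. A (x + y) = A x + A y) \<and> (\<forall>q x. q \<in> \<rat> \<longrightarrow> A (q * x) = q * A x)"

definition diff_op :: "real \<Rightarrow> (real \<Rightarrow> real) \<Rightarrow> (real \<Rightarrow> real)" where
  "diff_op h f = (\<lambda>x. f (x + h) - f x)"

definition monomial_fun :: "nat \<Rightarrow> (real \<Rightarrow> real) \<Rightarrow> bool" where
  "monomial_fun n f \<longleftrightarrow> (\<forall>x h. (1 / fact n) * ((diff_op h ^^ n) f) x = f h)"

definition totally_disconnected :: "'a::topological_space set \<Rightarrow> bool" where
  "totally_disconnected S \<longleftrightarrow> (\<forall>x\<in>S. connected_component_set S x = {x})"

end

theory Submission
  imports Defs
begin

lemma diff_op_app: "diff_op h f x = f (x + h) - f x"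
  by (simp add: diff_op_def)

lemma diff_lin:
  assumes "finite S"
  shows "(diff_op c ^^ k) (\<lambda>t. \<Sum>j\<in>S. w j * g j t) = (\<lambda>x. \<Sum>j\<in>S. w j * (diff_op c ^^ k) (g j) x)"
proof (induction k)
  case 0 then show ?case by simp
next
  case (Suc k)
  have "(diff_op c ^^ Suc k) (\<lambda>t. \<Sum>j\<in>S. w j * g j t) = diff_op c ((diff_op c ^^ k) (\<lambda>t. \<Sum>j\<in>S. w j * g j t))"
    by simp
  also have "\<dots> = diff_op c (\<lambda>x. \<Sum>j\<in>S. w j * (diff_op c ^^ k) (g j) x)"
    by (simp only: Suc)
  also have "\<dots> = (\<lambda>x. \<Sum>j\<in>S. w j * (diff_op c ^^ Suc k) (g j) x)"
    by (simp add: diff_op_def sum_subtractf[symmetric] right_diff_distrib)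
  finally show ?case .
qed

lemma diff_pow:
  "m \<le> k \<Longrightarrow> (diff_op c ^^ k) (\<lambda>t. t ^ m) x = (if m = k then fact k * c ^ k else 0)"
proof (induction k arbitrary: m x)
  case 0 then show ?case by simp
next
  case (Suc k)
  have d: "diff_op c (\<lambda>t::real. t ^ m) = (\<lambda>t. \<Sum>j<m. (of_nat (m choose j) * c ^ (m - j)) * t ^ j)"
  proof
    fix t :: real
    have "(t + c) ^ m = (\<Sum>j\<le>m. of_nat (m choose j) * t ^ j * c ^ (m - j))"
      by (rule binomial_ring)
    also have "\<dots> = (\<Sum>j<m. of_nat (m choose j) * t ^ j * c ^ (m - j)) + t ^ m"
      by (simp add: lessThan_Suc_atMost[symmetric])
    finally show "diff_op c (\<lambda>t. t ^ m) t = (\<Sum>j<m. (of_nat (m choose j) * c ^ (m - j)) * t ^ j)"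
      by (simp add: diff_op_def algebra_simps)
  qed
  have "(diff_op c ^^ Suc k) (\<lambda>t. t ^ m) x = (diff_op c ^^ k) (diff_op c (\<lambda>t. t ^ m)) x"
    by (simp add: funpow_Suc_right del: funpow.simps)
  also have "\<dots> = (\<Sum>j<m. (of_nat (m choose j) * c ^ (m - j)) * (diff_op c ^^ k) (\<lambda>t. t ^ j) x)"
    unfolding d by (simp add: diff_lin)
  also have "\<dots> = (\<Sum>j<m. (if j = k then (of_nat (m choose j) * c ^ (m - j)) * (fact k * c ^ k) else 0))"
    using Suc.prems by (intro sum.cong refl) (auto simp: Suc.IH)
  also have "\<dots> = (if k < m then (of_nat (m choose k) * c ^ (m - k)) * (fact k * c ^ k) else 0)"
    by (simp add: sum.delta')
  also have "\<dots> = (if m = Suc k then fact (Suc k) * c ^ Suc k else 0)"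
    using Suc.prems by (auto simp: algebra_simps)
  finally show ?case .
qed

lemma diff_comp:
  assumes add: "\<And>x y. A (x + y) = A x + A y"
  shows "(diff_op h ^^ k) (\<lambda>x. F (A x)) = (\<lambda>x. (diff_op (A h) ^^ k) F (A x))"
proof (induction k)
  case 0 then show ?case by simp
next
  case (Suc k)
  have "(diff_op h ^^ Suc k) (\<lambda>x. F (A x)) = diff_op h ((diff_op h ^^ k) (\<lambda>x. F (A x)))"
    by simp
  also have "\<dots> = diff_op h (\<lambda>x. (diff_op (A h) ^^ k) F (A x))"
    by (simp only: Suc)
  also have "\<dots> = (\<lambda>x. (diff_op (A h) ^^ Suc k) F (A x))"
    by (simp add: diff_op_def add)
  finally show ?case .
qed

lemma A_sum:
  assumes "rat_linear A" "finite T" "\<forall>t\<in>T. c t \<in> \<rat>"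
  shows "A (\<Sum>t\<in>T. c t * t) = (\<Sum>t\<in>T. c t * A t)"
  using assms(2,3)
proof (induction T rule: finite_induct)
  case empty
  have "A 0 = A 0 + A 0" using assms(1) unfolding rat_linear_def by (metis add_0)
  then show ?case by simp
next
  case (insert x F)
  then show ?case using assms(1) unfolding rat_linear_def by simp
qed

theorem mainTheorem4:
  fixes \<gamma> :: "real set" and A :: "real \<Rightarrow> real" and n :: nat
  assumes "hamel_basis \<gamma>" and "1 \<in> \<gamma>"
    and "rat_linear A" and "A 1 = 1" and "\<forall>b\<in>\<gamma> - {1}. A b = 0"
    and "n \<ge> 1"
  shows "\<not> continuous_on UNIV (\<lambda>x. A x ^ n)
    \<and> monomial_fun n (\<lambda>x. A x ^ n)
    \<and> totally_disconnected {(x, A x ^ n) | x. True}"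
proof -
  have add: "\<And>x y. A (x + y) = A x + A y" using assms(3) unfolding rat_linear_def by blast
  have Aq: "\<And>q. q \<in> \<rat> \<Longrightarrow> A q = q"
    using assms(3,4) unfolding rat_linear_def by (metis mult.right_neutral)
  have ArQ: "A x \<in> \<rat>" for x
  proof -
    have "x \<in> rat_span \<gamma>" using assms(1) unfolding hamel_basis_def by auto
    then obtain T c where T: "finite T" "T \<subseteq> \<gamma>" "\<forall>t\<in>T. c t \<in> \<rat>" "x = (\<Sum>t\<in>T. c t * t)"
      unfolding rat_span_def by blast
    have "A x = (\<Sum>t\<in>T. c t * A t)" using A_sum[OF assms(3) T(1) T(3)] T(4) by simp
    also have "\<dots> \<in> \<rat>"
    proof (rule Rats_sum)
      fix t assume "t \<in> T"
      then have "A t = 0 \<or> A t = 1" using T(2) assms(4,5) by (cases "t = 1") auto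
      then show "c t * A t \<in> \<rat>" using T(3) \<open>t \<in> T\<close> by auto
    qed
    finally show ?thesis .
  qed
  define f where "f = (\<lambda>x. A x ^ n)"
  have disc: "\<not> continuous_on UNIV f"
  proof
    assume cont: "continuous_on UNIV f"
    obtain b where b: "b \<in> \<gamma>" "b \<noteq> 1"
    proof (rule ccontr)
      assume "\<not> thesis"
      with that have sub: "\<gamma> \<subseteq> {1}" by blast
      have "(UNIV::real set) \<subseteq> \<rat>"
      proof (rule subsetI)
        fix x :: real assume "x \<in> UNIV"
        have "x \<in> rat_span \<gamma>" using assms(1) unfolding hamel_basis_def by auto
        then obtain T c where T: "finite T" "T \<subseteq> \<gamma>" "\<forall>t\<in>T. c t \<in> \<rat>" "x = (\<Sum>t\<in>T. c t * t)"
          unfolding rat_span_def by blast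
        have "(\<Sum>t\<in>T. c t * t) \<in> \<rat>"
          using T(2,3) sub by (intro Rats_sum) auto
        then show "x \<in> \<rat>" using T(4) by simp
      qed
      then have "countable (UNIV::real set)" using countable_rat countable_subset by blast
      then show False using uncountable_UNIV_real by blast
    qed
    have Ab: "A b = 0" using b assms(5) by auto
    have bnz: "b \<noteq> 0"
    proof
      assume "b = 0"
      have ind: "rat_independent \<gamma>" using assms(1) unfolding hamel_basis_def by blast
      have "\<forall>t\<in>{b}. (\<lambda>_. 1::real) t = 0"
        using ind[unfolded rat_independent_def, rule_format, of "{b}" "\<lambda>_. 1"] b(1) \<open>b = 0\<close> by simp
      then have "(1::real) = 0" by simp
      then show False by simp
    qed
    have "isCont f b" using cont by (simp add: continuous_on_eq_continuous_at)
    moreover have "\<bar>b\<bar> ^ n > 0" using bnz by simp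
    ultimately obtain d where d: "d > 0" "\<And>y. \<bar>y - b\<bar> < d \<Longrightarrow> \<bar>f y - f b\<bar> < \<bar>b\<bar> ^ n"
      unfolding continuous_at_eps_delta dist_real_def by blast
    have fb: "f b = 0" using Ab assms(6) by (simp add: f_def power_0_left)
    obtain q where q: "q \<in> \<rat>" "\<bar>q - b\<bar> < d" "\<bar>b\<bar> < \<bar>q\<bar>"
    proof (cases "b > 0")
      case True
      obtain q where "q \<in> \<rat>" "b < q" "q < b + d" using Rats_dense_in_real[of b "b + d"] d(1) by auto
      then show ?thesis using that True by auto
    next
      case False
      obtain q where "q \<in> \<rat>" "b - d < q" "q < b" using Rats_dense_in_real[of "b - d" b] d(1) by auto
      then show ?thesis using that False by auto
    qed
    then have "\<bar>q ^ n\<bar> < \<bar>b\<bar> ^ n" using d(2)[of q] fb Aq[OF q(1)] assms(6) by (simp add: f_def Ab power_0_left)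
    moreover have "\<bar>b\<bar> ^ n \<le> \<bar>q\<bar> ^ n" using q(3) by (intro power_mono) auto
    ultimately show False by (simp add: power_abs)
  qed
  have mono: "monomial_fun n f"
    unfolding monomial_fun_def
  proof (intro allI)
    fix x h
    have "(diff_op h ^^ n) f x = (diff_op (A h) ^^ n) (\<lambda>t. t ^ n) (A x)"
      using diff_comp[where A=A and h=h and k=n and F="\<lambda>t. t ^ n", OF add] by (simp add: f_def)
    also have "\<dots> = fact n * A h ^ n" by (simp add: diff_pow)
    finally show "1 / fact n * (diff_op h ^^ n) f x = f h" by (simp add: f_def)
  qed
  have td: "totally_disconnected {(x, f x) | x. True}"
    unfolding totally_disconnected_def
  proof
    define G where "G = {(x, f x) | x. True}"
    fix p assume "p \<in> {(x, f x) | x. True}"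
    then have pG: "p \<in> G" by (simp add: G_def)
    define C where "C = connected_component_set G p"
    have conn: "connected C" unfolding C_def by (rule connected_connected_component)
    have CG: "C \<subseteq> G" unfolding C_def by (rule connected_component_subset)
    have pC: "p \<in> C" unfolding C_def using pG by simp
    have snd_conn: "connected (snd ` C)"
      by (rule connected_continuous_image[OF _ conn]) (intro continuous_intros)
    have fst_conn: "connected (fst ` C)"
      by (rule connected_continuous_image[OF _ conn]) (intro continuous_intros)
    have sndQ: "snd ` C \<subseteq> \<rat>" using CG ArQ by (auto simp: G_def f_def)
    have snd_const: "snd z = snd p" if "z \<in> C" for z
    proof (rule ccontr)
      assume "snd z \<noteq> snd p"
      then have "uncountable (snd ` C)"
        using connected_uncountable[OF snd_conn, of "snd z" "snd p"] that pC by auto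
      moreover have "countable (snd ` C)" using sndQ countable_rat countable_subset by blast
      ultimately show False by blast
    qed
    have "z = p" if zC: "z \<in> C" for z
    proof (rule ccontr)
      assume zp: "z \<noteq> p"
      obtain u where u: "z = (u, f u)" using zC CG by (auto simp: G_def)
      obtain v where v: "p = (v, f v)" using pG by (auto simp: G_def)
      have uv: "u \<noteq> v" using zp u v by auto
      define a where "a = min u v"
      define b where "b = max u v"
      have ab: "a < b" using uv by (simp add: a_def b_def)
      have "{a..b} \<subseteq> fst ` C"
      proof (rule connected_contains_Icc[OF fst_conn])
        have "u \<in> fst ` C" "v \<in> fst ` C" using zC pC u v by (metis fst_conv image_eqI)+
        then show "a \<in> fst ` C" "b \<in> fst ` C" by (auto simp: a_def b_def min_def max_def)
      qed
      then have fconst: "f y = f v" if "y \<in> {a..b}" for y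
      proof -
        from that \<open>{a..b} \<subseteq> fst ` C\<close> obtain w where w: "w \<in> C" "fst w = y" by force
        then have "w = (y, f y)" using CG by (auto simp: G_def)
        then show ?thesis using snd_const[OF w(1)] v by simp
      qed
      obtain q1 where q1: "q1 \<in> \<rat>" "a < q1" "q1 < b" using Rats_dense_in_real[OF ab] by auto
      obtain q2 where q2: "q2 \<in> \<rat>" "q1 < q2" "q2 < b" using Rats_dense_in_real[OF q1(3)] by auto
      obtain q3 where q3: "q3 \<in> \<rat>" "q2 < q3" "q3 < b" using Rats_dense_in_real[OF q2(3)] by auto
      have fq: "q ^ n = f v" if "q \<in> \<rat>" "a < q" "q < b" for q
        using fconst[of q] that Aq[of q] by (simp add: f_def)
      have e12: "\<bar>q1\<bar> ^ n = \<bar>q2\<bar> ^ n" using fq[OF q1] fq[of q2] q1 q2 by (simp add: power_abs[symmetric])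
      have e23: "\<bar>q2\<bar> ^ n = \<bar>q3\<bar> ^ n" using fq[of q2] fq[of q3] q1 q2 q3 by (simp add: power_abs[symmetric])
      have n0: "0 < n" using assms(6) by simp
      have "\<bar>q1\<bar> = \<bar>q2\<bar>" using e12 power_eq_iff_eq_base[OF n0, of "\<bar>q1\<bar>" "\<bar>q2\<bar>"] by simp
      moreover have "\<bar>q2\<bar> = \<bar>q3\<bar>" using e23 power_eq_iff_eq_base[OF n0, of "\<bar>q2\<bar>" "\<bar>q3\<bar>"] by simp
      ultimately show False using q1 q2 q3 by (auto simp: abs_if split: if_splits)
    qed
    then show "connected_component_set {(x, f x) | x. True} p = {p}"
      using pC by (auto simp: C_def G_def)
  qed
  show ?thesis using disc mono td by (simp add: f_def)
qed

end
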